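(* Let $R$ be a commutative domain over $\mathbb{C}$, $m\ge1$, and $c(t)\in R[t]$. Consider the endomorphisms of $R(z_1,\dots,z_m)$ $$\sum_{r=1}^m\frac{c(z_r)}{\prod_{1\le s\le m,\,s\ne r}(z_r-z_s)}\,\beta_r \qquad\text{and}\qquad \partial_{m-1}\cdots\partial_1\,c(z_1)\,\beta_1 .$$ Applied to any element of $R(z_1,\dots,z_m)^{\Sigma_m}$ these two operators agree. In particular, both preserve $R[z_1,\dots,z_m]^{\Sigma_m}$.
   Context: $R(z_1,\dots,z_m)$ is the field of fractions of $R[z_1,\dots,z_m]$, with $\Sigma_m$ permuting the variables. For $1\le r\le m$, $\beta_r$ is the $R$-algebra endomorphism with $\beta_r(z_s)=z_s+2\delta_{r,s}$. For $1\le r<m$, $\partial_r=\frac{1}{z_{r+1}-z_r}(s_r-1)$, where $s_r$ is the $R$-algebra automorphism swapping $z_r$ and $z_{r+1}$. Polynomials such as $c(z_1)$ act by multiplication; operators are composed right to left. *)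

theory Defs
  imports "HOL-Library.Poly_Mapping" "HOL-Computational_Algebra.Polynomial"
    "HOL-Computational_Algebra.Fraction_Field" "HOL-Combinatorics.Permutations"
    Complex_Main
begin

text \<open>Multivariate polynomials over R in the variables z_0, z_1, z_2, ... ;
  a monomial is a finitely supported exponent vector nat =>0 nat.
  R[z_1,...,z_m] is the subring of polynomials whose variables lie in {1..m}.\<close>
type_synonym 'a mpol = "(nat \<Rightarrow>\<^sub>0 nat) \<Rightarrow>\<^sub>0 'a"

definition mVar :: "nat \<Rightarrow> ('a::comm_ring_1) mpol" where
  "mVar i = Poly_Mapping.single (Poly_Mapping.single i 1) 1"

definition mConst :: "'a::comm_ring_1 \<Rightarrow> 'a mpol" where
  "mConst a = Poly_Mapping.single 0 a"

definition mvars :: "('a::zero) mpol \<Rightarrow> nat set" where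
  "mvars p = (\<Union>mon\<in>Poly_Mapping.keys p. Poly_Mapping.keys mon)"

definition msubst :: "(nat \<Rightarrow> ('a::comm_ring_1) mpol) \<Rightarrow> 'a mpol \<Rightarrow> 'a mpol" where
  "msubst \<sigma> p = (\<Sum>mon\<in>Poly_Mapping.keys p. mConst (Poly_Mapping.lookup p mon) * (\<Prod>i\<in>Poly_Mapping.keys mon. \<sigma> i ^ Poly_Mapping.lookup mon i))"

definition fext :: "('a::idom \<Rightarrow> 'a) \<Rightarrow> 'a fract \<Rightarrow> 'a fract" where
  "fext h x = (SOME y. \<exists>a b. b \<noteq> 0 \<and> x = Fract a b \<and> y = Fract (h a) (h b))"

definition beta :: "nat \<Rightarrow> ('a::idom) mpol fract \<Rightarrow> 'a mpol fract" where
  "beta r = fext (msubst (\<lambda>s. if s = r then mVar s + 2 else mVar s))"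

definition perm_act :: "(nat \<Rightarrow> nat) \<Rightarrow> ('a::idom) mpol fract \<Rightarrow> 'a mpol fract" where
  "perm_act \<sigma> = fext (msubst (\<lambda>i. mVar (\<sigma> i)))"

definition swp :: "nat \<Rightarrow> ('a::idom) mpol fract \<Rightarrow> 'a mpol fract" where
  "swp r = perm_act (Transposition.transpose r (r+1))"

definition pz :: "nat \<Rightarrow> ('a::idom) mpol fract" where
  "pz i = Fract (mVar i) 1"

definition ddiff :: "nat \<Rightarrow> ('a::idom) mpol fract \<Rightarrow> 'a mpol fract" where
  "ddiff r g = (swp r g - g) / (pz (r+1) - pz r)"

definition cz :: "'a::idom poly \<Rightarrow> nat \<Rightarrow> 'a mpol fract" where
  "cz c r = Fract (poly (map_poly mConst c) (mVar r)) 1"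

definition opA :: "nat \<Rightarrow> 'a::idom poly \<Rightarrow> 'a mpol fract \<Rightarrow> 'a mpol fract" where
  "opA m c f = (\<Sum>r=1..m. cz c r / (\<Prod>s\<in>{1..m}-{r}. pz r - pz s) * beta r f)"

text \<open>Second operator: partial_{m-1} ... partial_1 c(z_1) beta_1 (rightmost applied first).\<close>
definition opB :: "nat \<Rightarrow> 'a::idom poly \<Rightarrow> 'a mpol fract \<Rightarrow> 'a mpol fract" where
  "opB m c f = fold ddiff [1..<m] (cz c 1 * beta 1 f)"

text \<open>R(z_1,...,z_m) inside the fraction field of R[z_0,z_1,...].\<close>
definition ratfun :: "nat \<Rightarrow> ('a::idom) mpol fract set" where
  "ratfun m = {Fract p q | p q. q \<noteq> 0 \<and> mvars p \<subseteq> {1..m} \<and> mvars q \<subseteq> {1..m}}"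

definition sym_ratfun :: "nat \<Rightarrow> ('a::idom) mpol fract set" where
  "sym_ratfun m = {f \<in> ratfun m. \<forall>\<sigma>. \<sigma> permutes {1..m} \<longrightarrow> perm_act \<sigma> f = f}"

definition sym_poly :: "nat \<Rightarrow> ('a::idom) mpol fract set" where
  "sym_poly m = {Fract p 1 | p. mvars p \<subseteq> {1..m} \<and>
      (\<forall>\<sigma>. \<sigma> permutes {1..m} \<longrightarrow> msubst (\<lambda>i. mVar (\<sigma> i)) p = p)}"

text \<open>R is a commutative domain over C: an idom with a unital ring homomorphism from C.\<close>
definition complex_alg_hom :: "(complex \<Rightarrow> 'a::idom) \<Rightarrow> bool" where
  "complex_alg_hom \<iota> \<longleftrightarrow> \<iota> 1 = 1 \<and> (\<forall>x y. \<iota> (x + y) = \<iota> x + \<iota> y) \<and> (\<forall>x y. \<iota> (x * y) = \<iota> x * \<iota> y)"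

end

theory Submission
  imports Defs
begin


definition meval :: "(nat \<Rightarrow> ('a::comm_ring_1) mpol) \<Rightarrow> (nat \<Rightarrow>\<^sub>0 nat) \<Rightarrow> 'a mpol" where
  "meval \<sigma> mon = (\<Prod>i\<in>Poly_Mapping.keys mon. \<sigma> i ^ Poly_Mapping.lookup mon i)"

lemma meval_superset:
  assumes "finite S" "Poly_Mapping.keys mon \<subseteq> S"
  shows "meval \<sigma> mon = (\<Prod>i\<in>S. \<sigma> i ^ Poly_Mapping.lookup mon i)"
  unfolding meval_def
  by (rule prod.mono_neutral_left[OF assms]) (auto simp: in_keys_iff)

lemma keys_add_nat: "Poly_Mapping.keys (k + l :: nat \<Rightarrow>\<^sub>0 nat) = Poly_Mapping.keys k \<union> Poly_Mapping.keys l"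
  by (auto simp: in_keys_iff lookup_add)

lemma meval_add: "meval \<sigma> (k + l) = meval \<sigma> k * meval \<sigma> l"
proof -
  let ?S = "Poly_Mapping.keys k \<union> Poly_Mapping.keys l"
  have "meval \<sigma> (k + l) = (\<Prod>i\<in>?S. \<sigma> i ^ Poly_Mapping.lookup (k+l) i)"
    by (rule meval_superset) (auto simp: keys_add_nat)
  also have "\<dots> = (\<Prod>i\<in>?S. \<sigma> i ^ Poly_Mapping.lookup k i) * (\<Prod>i\<in>?S. \<sigma> i ^ Poly_Mapping.lookup l i)"
    by (simp add: lookup_add power_add prod.distrib)
  also have "\<dots> = meval \<sigma> k * meval \<sigma> l"
    by (subst (1 2) meval_superset[of ?S]) auto
  finally show ?thesis .
qed

lemma meval_zero [simp]: "meval \<sigma> 0 = 1"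
  by (simp add: meval_def)

lemma mConst_0 [simp]: "mConst 0 = 0" by (simp add: mConst_def)
lemma mConst_1 [simp]: "mConst 1 = 1" by (simp add: mConst_def)
lemma mConst_add: "mConst (a + b) = mConst a + mConst b" by (simp add: mConst_def single_add)
lemma mConst_mult: "mConst (a * b) = mConst a * mConst b" by (simp add: mConst_def mult_single)

lemma msubst_superset:
  assumes "finite S" "Poly_Mapping.keys p \<subseteq> S"
  shows "msubst \<sigma> p = (\<Sum>mon\<in>S. mConst (Poly_Mapping.lookup p mon) * meval \<sigma> mon)"
  unfolding msubst_def meval_def[symmetric]
  by (rule sum.mono_neutral_left[OF assms]) (auto simp: in_keys_iff)

lemma msubst_add: "msubst \<sigma> (p + q) = msubst \<sigma> p + msubst \<sigma> q"
proof -
  let ?S = "Poly_Mapping.keys p \<union> Poly_Mapping.keys q"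
  have "msubst \<sigma> (p + q) = (\<Sum>mon\<in>?S. mConst (Poly_Mapping.lookup (p+q) mon) * meval \<sigma> mon)"
    by (rule msubst_superset) (use keys_add[of p q] in auto)
  also have "\<dots> = (\<Sum>mon\<in>?S. mConst (Poly_Mapping.lookup p mon) * meval \<sigma> mon) + (\<Sum>mon\<in>?S. mConst (Poly_Mapping.lookup q mon) * meval \<sigma> mon)"
    by (simp add: lookup_add mConst_add distrib_right sum.distrib)
  also have "\<dots> = msubst \<sigma> p + msubst \<sigma> q"
    by (subst (1 2) msubst_superset[of ?S]) auto
  finally show ?thesis .
qed

lemma msubst_0 [simp]: "msubst \<sigma> 0 = 0" by (simp add: msubst_def)

lemma msubst_sum: "msubst \<sigma> (sum f A) = (\<Sum>x\<in>A. msubst \<sigma> (f x))"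
  by (induction A rule: infinite_finite_induct) (auto simp: msubst_add)

lemma msubst_single: "msubst \<sigma> (Poly_Mapping.single k a) = mConst a * meval \<sigma> k"
  by (cases "a = 0") (simp_all add: msubst_def meval_def)

lemma pm_expand: "p = (\<Sum>k\<in>Poly_Mapping.keys p. Poly_Mapping.single k (Poly_Mapping.lookup p k))"
  by (rule poly_mapping_eqI) (auto simp: lookup_sum lookup_single when_def in_keys_iff)

lemma msubst_mult: "msubst \<sigma> (p * q) = msubst \<sigma> p * msubst \<sigma> q"
proof -
  let ?P = "Poly_Mapping.keys p" and ?Q = "Poly_Mapping.keys q"
  have "p * q = (\<Sum>k\<in>?P. Poly_Mapping.single k (Poly_Mapping.lookup p k)) * (\<Sum>l\<in>?Q. Poly_Mapping.single l (Poly_Mapping.lookup q l))"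
    by (subst (1) pm_expand[of p], subst (1) pm_expand[of q]) (rule refl)
  also have "\<dots> = (\<Sum>k\<in>?P. \<Sum>l\<in>?Q. Poly_Mapping.single (k+l) (Poly_Mapping.lookup p k * Poly_Mapping.lookup q l))"
    by (simp add: sum_product mult_single)
  finally have "msubst \<sigma> (p*q) = (\<Sum>k\<in>?P. \<Sum>l\<in>?Q. mConst (Poly_Mapping.lookup p k) * meval \<sigma> k * (mConst (Poly_Mapping.lookup q l) * meval \<sigma> l))"
    by (simp add: msubst_sum msubst_single meval_add mConst_mult mult_ac)
  also have "\<dots> = msubst \<sigma> p * msubst \<sigma> q"
    by (simp add: msubst_def meval_def sum_product)
  finally show ?thesis .
qed

lemma msubst_mConst [simp]: "msubst \<sigma> (mConst a) = mConst a"
  by (simp add: mConst_def msubst_single)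

lemma msubst_1 [simp]: "msubst \<sigma> 1 = 1"
  using msubst_mConst[of \<sigma> 1] by simp

lemma msubst_uminus: "msubst \<sigma> (- p) = - msubst \<sigma> p"
  using msubst_add[of \<sigma> p "-p"] by (simp add: eq_neg_iff_add_eq_0 add.commute)

lemma msubst_diff: "msubst \<sigma> (p - q) = msubst \<sigma> p - msubst \<sigma> q"
  using msubst_add[of \<sigma> p "-q"] by (simp add: msubst_uminus)

lemma msubst_prod: "msubst \<sigma> (prod f A) = (\<Prod>x\<in>A. msubst \<sigma> (f x))"
  by (induction A rule: infinite_finite_induct) (auto simp: msubst_mult)

lemma msubst_power: "msubst \<sigma> (p ^ n) = msubst \<sigma> p ^ n"
  by (induction n) (auto simp: msubst_mult)

lemma msubst_numeral [simp]: "msubst \<sigma> (numeral n) = numeral n"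
  by (metis mConst_def msubst_mConst single_numeral)

lemma msubst_mVar [simp]: "msubst \<sigma> (mVar i) = \<sigma> i"
  by (simp add: mVar_def msubst_single meval_def)

lemma msubst_comp: "msubst \<sigma> (msubst \<tau> p) = msubst (\<lambda>i. msubst \<sigma> (\<tau> i)) p"
  unfolding msubst_def[of \<tau>]
  by (simp add: msubst_sum msubst_mult msubst_prod msubst_power msubst_def[of "(\<lambda>i. msubst \<sigma> (\<tau> i))"])

lemma mVar_power: "mVar i ^ n = Poly_Mapping.single (Poly_Mapping.single i n) 1"
  by (induction n) (auto simp: mVar_def mult_single single_add[symmetric])

lemma prod_single1: "(\<Prod>i\<in>A. Poly_Mapping.single (f i) (1::'a::comm_ring_1)) = Poly_Mapping.single (\<Sum>i\<in>A. f i) 1"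
  by (induction A rule: infinite_finite_induct) (auto simp: mult_single)

lemma msubst_id: "msubst mVar p = p"
proof -
  have ME: "meval mVar mon = Poly_Mapping.single mon 1" for mon
  proof -
    have "meval mVar mon = (\<Prod>i\<in>Poly_Mapping.keys mon. Poly_Mapping.single (Poly_Mapping.single i (Poly_Mapping.lookup mon i)) 1)"
      by (simp add: meval_def mVar_power)
    also have "\<dots> = Poly_Mapping.single (\<Sum>i\<in>Poly_Mapping.keys mon. Poly_Mapping.single i (Poly_Mapping.lookup mon i)) 1"
      by (rule prod_single1)
    also have "\<dots> = Poly_Mapping.single mon 1" by (subst (2) pm_expand) (rule refl)
    finally show ?thesis .
  qed
  have "msubst mVar p = (\<Sum>k\<in>Poly_Mapping.keys p. Poly_Mapping.single k (Poly_Mapping.lookup p k))"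
    unfolding msubst_def meval_def[symmetric] ME by (simp add: mConst_def mult_single)
  then show ?thesis using pm_expand[of p] by simp
qed



definition good :: "(nat \<Rightarrow> ('a::comm_ring_1) mpol) \<Rightarrow> bool" where
  "good \<sigma> \<longleftrightarrow> (\<exists>\<sigma>'. \<forall>i. msubst \<sigma>' (\<sigma> i) = mVar i)"

lemma good_inj:
  assumes "good \<sigma>" "msubst \<sigma> p = msubst \<sigma> q" shows "p = q"
proof -
  obtain \<sigma>' where s: "\<And>i. msubst \<sigma>' (\<sigma> i) = mVar i" using assms(1) by (auto simp: good_def)
  have "msubst \<sigma>' (msubst \<sigma> x) = x" for x
    by (simp add: msubst_comp s msubst_id)
  from this[of p] this[of q] assms(2) show ?thesis by metis
qed

lemma good_nz: "good \<sigma> \<Longrightarrow> b \<noteq> 0 \<Longrightarrow> msubst \<sigma> b \<noteq> 0"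
  using good_inj[of \<sigma> b 0] by auto

lemma good_comp:
  assumes "good \<sigma>" "good \<tau>" shows "good (\<lambda>i. msubst \<sigma> (\<tau> i))"
proof -
  obtain \<sigma>' where s: "\<And>i. msubst \<sigma>' (\<sigma> i) = mVar i" using assms(1) by (auto simp: good_def)
  obtain \<tau>' where t: "\<And>i. msubst \<tau>' (\<tau> i) = mVar i" using assms(2) by (auto simp: good_def)
  have "msubst \<sigma>' (msubst \<sigma> x) = x" for x
    by (simp add: msubst_comp s msubst_id)
  then have "msubst (\<lambda>i. msubst \<tau>' (\<sigma>' i)) (msubst \<sigma> (\<tau> i)) = mVar i" for i
    by (metis msubst_comp t)
  then show ?thesis unfolding good_def by blast
qed

definition F :: "(nat \<Rightarrow> ('a::idom) mpol) \<Rightarrow> 'a mpol fract \<Rightarrow> 'a mpol fract" where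
  "F \<sigma> = fext (msubst \<sigma>)"

lemma F_Fract:
  assumes g: "good \<sigma>" and b: "b \<noteq> 0"
  shows "F \<sigma> (Fract a b) = Fract (msubst \<sigma> a) (msubst \<sigma> b)"
proof -
  let ?P = "\<lambda>y. \<exists>a' b'. b' \<noteq> 0 \<and> Fract a b = Fract a' b' \<and> y = Fract (msubst \<sigma> a') (msubst \<sigma> b')"
  have ex: "\<exists>y. ?P y" using b by blast
  have "?P (SOME y. ?P y)" by (rule someI_ex[OF ex])
  then obtain a' b' where b': "b' \<noteq> 0" and e: "Fract a b = Fract a' b'"
      and y: "(SOME y. ?P y) = Fract (msubst \<sigma> a') (msubst \<sigma> b')" by blast
  from e b b' have "a * b' = a' * b" by (simp add: eq_fract)
  then have "msubst \<sigma> a * msubst \<sigma> b' = msubst \<sigma> a' * msubst \<sigma> b" by (metis msubst_mult)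
  then have "Fract (msubst \<sigma> a') (msubst \<sigma> b') = Fract (msubst \<sigma> a) (msubst \<sigma> b)"
    using good_nz[OF g b] good_nz[OF g b'] by (simp add: eq_fract)
  then show ?thesis unfolding F_def fext_def using y by simp
qed

lemma F_add: "good \<sigma> \<Longrightarrow> F \<sigma> (x + y) = F \<sigma> x + F \<sigma> y"
  by (cases x, cases y) (simp add: F_Fract good_nz msubst_add msubst_mult)

lemma F_mult: "good \<sigma> \<Longrightarrow> F \<sigma> (x * y) = F \<sigma> x * F \<sigma> y"
  by (cases x, cases y) (simp add: F_Fract good_nz msubst_mult)

lemma F_uminus: "good \<sigma> \<Longrightarrow> F \<sigma> (- x) = - F \<sigma> x"
  by (cases x) (simp add: F_Fract good_nz msubst_uminus)

lemma F_diff: "good \<sigma> \<Longrightarrow> F \<sigma> (x - y) = F \<sigma> x - F \<sigma> y"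
  by (cases x, cases y) (simp add: F_Fract good_nz msubst_diff msubst_mult)

lemma F_0: "good \<sigma> \<Longrightarrow> F \<sigma> 0 = 0"
  by (simp add: Zero_fract_def F_Fract)

lemma F_1: "good \<sigma> \<Longrightarrow> F \<sigma> 1 = 1"
  by (simp add: One_fract_def F_Fract)

lemma F_inverse: "good \<sigma> \<Longrightarrow> F \<sigma> (inverse x) = inverse (F \<sigma> x)"
proof (cases x)
  case (Fract a b)
  assume g: "good \<sigma>"
  show ?thesis
  proof (cases "a = 0")
    case True
    have "x = 0" using Fract True by (simp add: Zero_fract_def eq_fract)
    then show ?thesis using g by (simp add: F_0)
  next
    case False then show ?thesis using Fract g by (simp add: F_Fract good_nz)
  qed
qed

lemma F_divide: "good \<sigma> \<Longrightarrow> F \<sigma> (x / y) = F \<sigma> x / F \<sigma> y"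
  by (simp add: divide_inverse F_mult F_inverse)

lemma F_sum: "good \<sigma> \<Longrightarrow> F \<sigma> (sum f A) = (\<Sum>x\<in>A. F \<sigma> (f x))"
  by (induction A rule: infinite_finite_induct) (auto simp: F_add F_0)

lemma F_prod: "good \<sigma> \<Longrightarrow> F \<sigma> (prod f A) = (\<Prod>x\<in>A. F \<sigma> (f x))"
  by (induction A rule: infinite_finite_induct) (auto simp: F_mult F_1)

lemma F_comp: "good \<sigma> \<Longrightarrow> good \<tau> \<Longrightarrow> F \<sigma> (F \<tau> x) = F (\<lambda>i. msubst \<sigma> (\<tau> i)) x"
  by (cases x) (simp add: F_Fract good_nz good_comp msubst_comp)

lemma F_pz: "good \<sigma> \<Longrightarrow> F \<sigma> (pz i) = Fract (\<sigma> i) 1"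
  by (simp add: pz_def F_Fract)

lemma msubst_poly: "msubst \<sigma> (poly (map_poly mConst c) x) = poly (map_poly mConst c) (msubst \<sigma> x)"
  by (induction c) (simp_all add: map_poly_pCons msubst_add msubst_mult)

lemma F_cz: "good \<sigma> \<Longrightarrow> F \<sigma> (cz c i) = Fract (poly (map_poly mConst c) (\<sigma> i)) 1"
  by (simp add: cz_def F_Fract msubst_poly)

definition shf :: "nat \<Rightarrow> nat \<Rightarrow> ('a::comm_ring_1) mpol" where
  "shf r = (\<lambda>s. if s = r then mVar s + 2 else mVar s)"

definition pm :: "(nat \<Rightarrow> nat) \<Rightarrow> nat \<Rightarrow> ('a::comm_ring_1) mpol" where
  "pm \<sigma> = (\<lambda>i. mVar (\<sigma> i))"

lemma good_shf: "good (shf r)"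
  unfolding good_def
  by (rule exI[of _ "\<lambda>s. if s = r then mVar s - 2 else mVar s"]) (simp add: shf_def msubst_add)

lemma good_pm: "bij \<sigma> \<Longrightarrow> good (pm \<sigma>)"
  unfolding good_def
  by (rule exI[of _ "pm (inv \<sigma>)"]) (simp add: pm_def bij_is_inj)

lemma beta_F: "beta r = F (shf r)" by (simp add: beta_def F_def shf_def fun_eq_iff)
lemma perm_act_F: "perm_act \<sigma> = F (pm \<sigma>)" by (simp add: perm_act_def F_def pm_def fun_eq_iff)

lemma perm_beta:
  assumes "bij \<sigma>"
  shows "perm_act \<sigma> (beta r x) = beta (\<sigma> r) (perm_act \<sigma> x)"
proof -
  have e: "(\<lambda>i. msubst (pm \<sigma>) (shf r i)) = (\<lambda>i. msubst (shf (\<sigma> r)) (pm \<sigma> i))"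
    using bij_is_inj[OF assms] by (auto simp: fun_eq_iff shf_def pm_def msubst_add inj_eq)
  show ?thesis
    by (simp only: beta_F perm_act_F F_comp[OF good_pm[OF assms] good_shf] F_comp[OF good_shf good_pm[OF assms]] e)
qed

lemma perm_pz: "bij \<sigma> \<Longrightarrow> perm_act \<sigma> (pz i) = pz (\<sigma> i)"
  by (simp add: perm_act_F F_pz good_pm, simp add: pm_def pz_def)

lemma perm_cz: "bij \<sigma> \<Longrightarrow> perm_act \<sigma> (cz c i) = cz c (\<sigma> i)"
  by (simp add: perm_act_F F_cz good_pm, simp add: pm_def cz_def)



lemma aux_frac:
  fixes u v q c d :: "'b::field"
  assumes "u \<noteq> 0" "v \<noteq> 0" "q \<noteq> 0"
  shows "c / (q * v) * d - c / (q * u) * d = c * d * (u - v) / (q * u * v)"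
  using assms by (simp add: field_simps)

lemma aux_frac2:
  fixes p q d e c1 c2 b1 b2 :: "'b::field"
  assumes "d \<noteq> 0" "p \<noteq> 0" "q \<noteq> 0" "e = - d"
  shows "(c1 / p * b1 - c2 / q * b2) / d = c1 / (p * d) * b1 + c2 / (q * e) * b2"
  using assms by (simp add: field_simps)

lemma step_abstract:
  fixes x C B :: "nat \<Rightarrow> 'b::field"
  assumes fin: "finite A" and aA: "a \<notin> A" and bA: "b \<notin> A" and ab: "a \<noteq> b"
    and inj: "inj_on x (insert a (insert b A))"
    and ta: "\<tau> a = b" and tb: "\<tau> b = a" and tA: "\<And>s. s \<in> A \<Longrightarrow> \<tau> s = s"
  shows "((\<Sum>r\<in>insert a A. C (\<tau> r) / (\<Prod>s\<in>insert a A - {r}. x (\<tau> r) - x (\<tau> s)) * B (\<tau> r))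
          - (\<Sum>r\<in>insert a A. C r / (\<Prod>s\<in>insert a A - {r}. x r - x s) * B r)) / (x b - x a)
       = (\<Sum>r\<in>insert b (insert a A). C r / (\<Prod>s\<in>insert b (insert a A) - {r}. x r - x s) * B r)"
proof -
  define Q where "Q r = (\<Prod>s\<in>A-{r}. x r - x s)" for r
  have dist: "x r \<noteq> x s" if "r \<in> insert a (insert b A)" "s \<in> insert a (insert b A)" "r \<noteq> s" for r s
    using inj_onD[OF inj _ that(1) that(2)] that(3) by blast
  have Qnz: "Q r \<noteq> 0" if "r \<in> insert a (insert b A)" for r
    unfolding Q_def using fin dist[OF that] by (auto simp: prod_zero_iff)
  have QA: "Q r = (\<Prod>s\<in>A. x r - x s)" if "r \<notin> A" for r
    using that by (simp add: Q_def)
  have h1: "(\<Sum>r\<in>insert a A. C (\<tau> r) / (\<Prod>s\<in>insert a A - {r}. x (\<tau> r) - x (\<tau> s)) * B (\<tau> r))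
      = C b / Q b * B b + (\<Sum>r\<in>A. C r / (Q r * (x r - x b)) * B r)"
  proof -
    have "(\<Prod>s\<in>insert a A - {a}. x (\<tau> a) - x (\<tau> s)) = Q b"
      using aA bA by (simp add: ta QA tA)
    moreover have "(\<Prod>s\<in>insert a A - {r}. x (\<tau> r) - x (\<tau> s)) = Q r * (x r - x b)" if "r \<in> A" for r
    proof -
      have "insert a A - {r} = insert a (A - {r})" using that aA by auto
      then show ?thesis using that aA fin by (simp add: ta tA Q_def mult.commute)
    qed
    ultimately show ?thesis using fin aA ta tA by (simp add: sum.insert)
  qed
  have h2: "(\<Sum>r\<in>insert a A. C r / (\<Prod>s\<in>insert a A - {r}. x r - x s) * B r)
      = C a / Q a * B a + (\<Sum>r\<in>A. C r / (Q r * (x r - x a)) * B r)"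
  proof -
    have "(\<Prod>s\<in>insert a A - {a}. x a - x s) = Q a"
      using aA by (simp add: QA)
    moreover have "(\<Prod>s\<in>insert a A - {r}. x r - x s) = Q r * (x r - x a)" if "r \<in> A" for r
    proof -
      have "insert a A - {r} = insert a (A - {r})" using that aA by auto
      then show ?thesis using that aA fin by (simp add: Q_def mult.commute)
    qed
    ultimately show ?thesis using fin aA by (simp add: sum.insert)
  qed
  have h3: "(\<Sum>r\<in>insert b (insert a A). C r / (\<Prod>s\<in>insert b (insert a A) - {r}. x r - x s) * B r)
      = C b / (Q b * (x b - x a)) * B b + (C a / (Q a * (x a - x b)) * B a
        + (\<Sum>r\<in>A. C r / (Q r * (x r - x a) * (x r - x b)) * B r))"
  proof -
    have "(\<Prod>s\<in>insert b (insert a A) - {b}. x b - x s) = Q b * (x b - x a)"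
      using aA bA ab fin by (simp add: QA)
    moreover have "(\<Prod>s\<in>insert b (insert a A) - {a}. x a - x s) = Q a * (x a - x b)"
    proof -
      have "insert b (insert a A) - {a} = insert b A" using ab aA by auto
      then show ?thesis using aA bA fin by (simp add: QA mult.commute)
    qed
    moreover have "(\<Prod>s\<in>insert b (insert a A) - {r}. x r - x s) = Q r * (x r - x a) * (x r - x b)" if "r \<in> A" for r
    proof -
      have "insert b (insert a A) - {r} = insert b (insert a (A - {r}))" using that aA bA by auto
      then show ?thesis using that aA bA ab fin by (simp add: Q_def mult_ac)
    qed
    ultimately show ?thesis using fin aA bA ab by (simp add: sum.insert)
  qed
  have ba: "x b - x a \<noteq> 0" using dist[of b a] ab by auto
  have trm: "(C r / (Q r * (x r - x b)) * B r - C r / (Q r * (x r - x a)) * B r) / (x b - x a)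
      = C r / (Q r * (x r - x a) * (x r - x b)) * B r" if "r \<in> A" for r
  proof -
    have "x r - x a \<noteq> 0" "x r - x b \<noteq> 0" "Q r \<noteq> 0"
      using dist[of r a] dist[of r b] Qnz[of r] that aA bA by auto
    then have e1: "C r / (Q r * (x r - x b)) * B r - C r / (Q r * (x r - x a)) * B r
        = C r * B r * ((x r - x a) - (x r - x b)) / (Q r * (x r - x a) * (x r - x b))"
      by (rule aux_frac)
    have e2: "(x r - x a) - (x r - x b) = x b - x a" by simp
    show ?thesis unfolding e1 e2 using ba by simp
  qed
  have "(C b / Q b * B b + (\<Sum>r\<in>A. C r / (Q r * (x r - x b)) * B r)
         - (C a / Q a * B a + (\<Sum>r\<in>A. C r / (Q r * (x r - x a)) * B r))) / (x b - x a)
      = (C b / Q b * B b - C a / Q a * B a) / (x b - x a)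
        + (\<Sum>r\<in>A. (C r / (Q r * (x r - x b)) * B r - C r / (Q r * (x r - x a)) * B r) / (x b - x a))"
    by (simp add: sum_subtractf sum_divide_distrib[symmetric] add_divide_distrib[symmetric] algebra_simps)
  also have "\<dots> = (C b / Q b * B b - C a / Q a * B a) / (x b - x a)
        + (\<Sum>r\<in>A. C r / (Q r * (x r - x a) * (x r - x b)) * B r)"
    using trm by simp
  also have "(C b / Q b * B b - C a / Q a * B a) / (x b - x a)
      = C b / (Q b * (x b - x a)) * B b + C a / (Q a * (x a - x b)) * B a"
  proof -
    show ?thesis by (rule aux_frac2) (use ba Qnz[of a] Qnz[of b] in auto)
  qed
  finally show ?thesis unfolding h1 h2 h3 by (simp add: algebra_simps)
qed



definition vin :: "nat set \<Rightarrow> ('a::comm_ring_1) mpol \<Rightarrow> bool" where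
  "vin A p \<longleftrightarrow> mvars p \<subseteq> A"

lemma vin_add: "vin A p \<Longrightarrow> vin A q \<Longrightarrow> vin A (p + q)"
  unfolding vin_def mvars_def using keys_add[of p q] by blast

lemma vin_uminus: "vin A p \<Longrightarrow> vin A (- p)"
  unfolding vin_def mvars_def by (simp add: in_keys_iff) 

lemma vin_diff: "vin A p \<Longrightarrow> vin A q \<Longrightarrow> vin A (p - q)"
  using vin_add[of A p "-q"] vin_uminus[of A q] by simp

lemma vin_mult: "vin A p \<Longrightarrow> vin A q \<Longrightarrow> vin A (p * q)"
proof -
  assume a: "vin A p" "vin A q"
  have "Poly_Mapping.keys mon \<subseteq> A" if mon: "mon \<in> Poly_Mapping.keys (p * q)" for mon
  proof -
    obtain k l where "mon = k + l" "k \<in> Poly_Mapping.keys p" "l \<in> Poly_Mapping.keys q"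
      using keys_mult[of p q] mon by blast
    then show ?thesis using a unfolding vin_def mvars_def by (auto simp: keys_add_nat)
  qed
  then show ?thesis unfolding vin_def mvars_def by blast
qed

lemma vin_mConst: "vin A (mConst a)"
  by (simp add: vin_def mvars_def mConst_def)

lemma vin_0: "vin A 0" using vin_mConst[of A 0] by simp
lemma vin_1: "vin A 1" using vin_mConst[of A 1] by simp

lemma vin_mVar: "i \<in> A \<Longrightarrow> vin A (mVar i)"
  by (simp add: vin_def mvars_def mVar_def)

lemma vin_sum: "(\<And>x. x \<in> S \<Longrightarrow> vin A (f x)) \<Longrightarrow> vin A (sum f S)"
  by (induction S rule: infinite_finite_induct) (auto simp: vin_0 vin_add)

lemma vin_prod: "(\<And>x. x \<in> S \<Longrightarrow> vin A (f x)) \<Longrightarrow> vin A (prod f S)"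
  by (induction S rule: infinite_finite_induct) (auto simp: vin_1 vin_mult)

lemma vin_power: "vin A p \<Longrightarrow> vin A (p ^ n)"
  by (induction n) (auto simp: vin_1 vin_mult)

lemma keys_mon_sub: "mon \<in> Poly_Mapping.keys p \<Longrightarrow> Poly_Mapping.keys mon \<subseteq> mvars p"
  unfolding mvars_def by blast

lemma vin_msubst:
  assumes "vin A p" "\<And>i. i \<in> A \<Longrightarrow> vin B (\<sigma> i)"
  shows "vin B (msubst \<sigma> p)"
  unfolding msubst_def
  by (intro vin_sum vin_mult vin_mConst vin_prod vin_power assms(2))
     (use assms(1) keys_mon_sub in \<open>auto simp: vin_def\<close>)

lemma vin_poly: "vin A x \<Longrightarrow> vin A (poly (map_poly mConst c) x)"
  by (induction c) (simp_all add: map_poly_pCons vin_add vin_mult vin_mConst vin_0)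

definition mcong :: "nat set \<Rightarrow> ('a::comm_ring_1) mpol \<Rightarrow> 'a mpol \<Rightarrow> 'a mpol \<Rightarrow> bool" where
  "mcong A d p q \<longleftrightarrow> vin A p \<and> vin A q \<and> (\<exists>t. vin A t \<and> p - q = d * t)"

lemma mcong_refl: "vin A p \<Longrightarrow> mcong A d p p"
  unfolding mcong_def by (auto intro!: exI[of _ 0] vin_0)

lemma mcong_add: "mcong A d p1 q1 \<Longrightarrow> mcong A d p2 q2 \<Longrightarrow> mcong A d (p1 + p2) (q1 + q2)"
  unfolding mcong_def
  apply (clarsimp simp: vin_add)
  subgoal for t1 t2 by (rule exI[of _ "t1 + t2"]) (auto simp: vin_add algebra_simps)
  done

lemma mcong_mult: "mcong A d p1 q1 \<Longrightarrow> mcong A d p2 q2 \<Longrightarrow> mcong A d (p1 * p2) (q1 * q2)"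
  unfolding mcong_def
  apply (clarsimp simp: vin_mult)
  subgoal for t1 t2
  proof (rule exI[of _ "p1 * t2 + t1 * q2"], intro conjI)
    assume h: "vin A p1" "vin A q1" "vin A t1" "p1 - q1 = d * t1" "vin A p2" "vin A q2" "vin A t2" "p2 - q2 = d * t2"
    show "vin A (p1 * t2 + t1 * q2)" using h by (simp add: vin_add vin_mult)
    have "p1 * p2 - q1 * q2 = p1 * (p2 - q2) + (p1 - q1) * q2" by (simp add: algebra_simps)
    then show "p1 * p2 - q1 * q2 = d * (p1 * t2 + t1 * q2)" using h by (simp add: algebra_simps)
  qed
  done

lemma mcong_sum: "(\<And>x. x \<in> S \<Longrightarrow> mcong A d (f x) (g x)) \<Longrightarrow> mcong A d (sum f S) (sum g S)"
  by (induction S rule: infinite_finite_induct) (auto simp: mcong_refl vin_0 mcong_add)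

lemma mcong_prod: "(\<And>x. x \<in> S \<Longrightarrow> mcong A d (f x) (g x)) \<Longrightarrow> mcong A d (prod f S) (prod g S)"
  by (induction S rule: infinite_finite_induct) (auto simp: mcong_refl vin_1 mcong_mult)

lemma mcong_power: "mcong A d p q \<Longrightarrow> mcong A d (p ^ n) (q ^ n)"
  by (induction n) (auto simp: mcong_refl vin_1 mcong_mult)

lemma mcong_msubst:
  assumes "vin A p" "\<And>i. i \<in> A \<Longrightarrow> mcong A d (\<sigma> i) (mVar i)"
  shows "mcong A d (msubst \<sigma> p) p"
proof -
  have "mcong A d (msubst \<sigma> p) (msubst mVar p)"
    unfolding msubst_def
    by (intro mcong_sum mcong_mult mcong_refl vin_mConst mcong_prod mcong_power assms(2))
       (use assms(1) keys_mon_sub in \<open>auto simp: vin_def\<close>)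
  then show ?thesis by (simp add: msubst_id)
qed

lemma mVar_inj: "mVar i = (mVar j :: ('a::comm_ring_1) mpol) \<longleftrightarrow> i = j"
proof
  assume "mVar i = (mVar j :: 'a mpol)"
  then have "Poly_Mapping.single i (1::nat) = Poly_Mapping.single j 1"
    unfolding mVar_def using inj_single[THEN injD] by (metis lookup_single_eq lookup_single_not_eq one_neq_zero)
  then show "i = j" by (metis lookup_single_eq lookup_single_not_eq one_neq_zero)
qed simp

lemma pz_inj: "pz i = (pz j :: ('a::idom) mpol fract) \<longleftrightarrow> i = j"
  by (simp add: pz_def eq_fract mVar_inj)

definition polyin :: "nat \<Rightarrow> ('a::idom) mpol fract \<Rightarrow> bool" where
  "polyin m g \<longleftrightarrow> (\<exists>q. g = Fract q 1 \<and> vin {1..m} q)"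

lemma perm_Fract1: "bij \<sigma> \<Longrightarrow> perm_act \<sigma> (Fract p 1) = Fract (msubst (\<lambda>i. mVar (\<sigma> i)) p) 1"
  by (simp add: perm_act_F F_Fract good_pm, simp add: pm_def)

lemma beta_Fract1: "beta r (Fract p 1) = Fract (msubst (shf r) p) 1"
  by (simp add: beta_F F_Fract good_shf)

lemma ddiff_polyin:
  assumes "polyin m g" "1 \<le> k" "k + 1 \<le> m"
  shows "polyin m (ddiff k g)"
proof -
  obtain p where g: "g = Fract p 1" and vp: "vin {1..m} p" using assms(1) by (auto simp: polyin_def)
  define \<tau> where "\<tau> = Transposition.transpose k (k+1)"
  define d :: "'a mpol" where "d = mVar (k+1) - mVar k"
  have "mcong {1..m} d (msubst (\<lambda>i. mVar (\<tau> i)) p) p"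
  proof (rule mcong_msubst[OF vp])
    fix i assume i: "i \<in> {1..m}"
    have vi: "vin {1..m} (mVar i :: 'a mpol)" using i by (simp add: vin_mVar)
    show "mcong {1..m} d (mVar (\<tau> i)) (mVar i)"
    proof (cases "i = k \<or> i = k + 1")
      case True
      have vk: "vin {1..m} (mVar k :: 'a mpol)" "vin {1..m} (mVar (k+1) :: 'a mpol)"
        using assms by (auto simp: vin_mVar)
      show ?thesis
      proof (cases "i = k")
        case True
        then show ?thesis unfolding mcong_def using vk
          by (auto simp: \<tau>_def d_def intro!: exI[of _ 1] vin_1)
      next
        case False
        then have "i = k + 1" using \<open>i = k \<or> i = k + 1\<close> by simp
        then show ?thesis unfolding mcong_def using vk
          by (auto simp: \<tau>_def d_def intro!: exI[of _ "-1"] vin_uminus vin_1)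
      qed
    next
      case False
      then show ?thesis using vi by (simp add: \<tau>_def mcong_refl)
    qed
  qed
  then obtain t where vt: "vin {1..m} t" and e: "msubst (\<lambda>i. mVar (\<tau> i)) p - p = d * t"
    by (auto simp: mcong_def)
  have dnz: "d \<noteq> 0" by (simp add: d_def mVar_inj)
  have "ddiff k g = Fract (msubst (\<lambda>i. mVar (\<tau> i)) p - p) 1 / Fract d 1"
    unfolding ddiff_def swp_def \<tau>_def[symmetric] g
    by (simp add: perm_Fract1 \<tau>_def pz_def d_def)
  also have "\<dots> = Fract (d * t) 1 / Fract d 1" by (simp only: e)
  also have "\<dots> = Fract t 1" using dnz by (simp add: eq_fract)
  finally show ?thesis using vt by (auto simp: polyin_def)
qed



lemma perm_sum: "bij \<sigma> \<Longrightarrow> perm_act \<sigma> (sum g A) = (\<Sum>x\<in>A. perm_act \<sigma> (g x))"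
  by (simp add: perm_act_F F_sum good_pm)
lemma perm_prod: "bij \<sigma> \<Longrightarrow> perm_act \<sigma> (prod g A) = (\<Prod>x\<in>A. perm_act \<sigma> (g x))"
  by (simp add: perm_act_F F_prod good_pm)
lemma perm_mult: "bij \<sigma> \<Longrightarrow> perm_act \<sigma> (x * y) = perm_act \<sigma> x * perm_act \<sigma> y"
  by (simp add: perm_act_F F_mult good_pm)
lemma perm_divide: "bij \<sigma> \<Longrightarrow> perm_act \<sigma> (x / y) = perm_act \<sigma> x / perm_act \<sigma> y"
  by (simp add: perm_act_F F_divide good_pm)
lemma perm_diff: "bij \<sigma> \<Longrightarrow> perm_act \<sigma> (x - y) = perm_act \<sigma> x - perm_act \<sigma> y"
  by (simp add: perm_act_F F_diff good_pm)

lemma perm_term: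
  assumes "bij \<sigma>" "perm_act \<sigma> f = f"
  shows "perm_act \<sigma> (cz c r / (\<Prod>s\<in>S. pz r - pz s) * beta r f)
       = cz c (\<sigma> r) / (\<Prod>s\<in>S. pz (\<sigma> r) - pz (\<sigma> s)) * beta (\<sigma> r) f"
  using assms by (simp add: perm_mult perm_divide perm_prod perm_diff perm_pz perm_cz perm_beta)

lemma fold_formula:
  assumes symf: "\<And>\<sigma>. \<sigma> permutes {1..m} \<Longrightarrow> perm_act \<sigma> f = f" and k: "1 \<le> k" "k \<le> m"
  shows "fold ddiff [1..<k] (cz c 1 * beta 1 f)
       = (\<Sum>r\<in>{1..k}. cz c r / (\<Prod>s\<in>{1..k}-{r}. pz r - pz s) * beta r f)"
  using k
proof (induction k rule: dec_induct)
  case base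
  then show ?case by simp
next
  case (step n)
  define \<tau> where "\<tau> = Transposition.transpose n (n+1)"
  have tp: "\<tau> permutes {1..m}" unfolding \<tau>_def using step by (intro permutes_swap_id) auto
  have bt: "bij \<tau>" by (simp add: \<tau>_def)
  define G where "G = (\<Sum>r\<in>{1..n}. cz c r / (\<Prod>s\<in>{1..n}-{r}. pz r - pz s) * beta r f)"
  have e1: "fold ddiff [1..<Suc n] (cz c 1 * beta 1 f) = (perm_act \<tau> G - G) / (pz (n+1) - pz n)"
  proof -
    have "fold ddiff [1..<Suc n] (cz c 1 * beta 1 f) = ddiff n (fold ddiff [1..<n] (cz c 1 * beta 1 f))"
      using step by simp
    also have "\<dots> = ddiff n G" using step by (simp only: G_def)
    finally show ?thesis by (simp only: ddiff_def swp_def \<tau>_def)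
  qed
  have e2: "perm_act \<tau> G = (\<Sum>r\<in>{1..n}. cz c (\<tau> r) / (\<Prod>s\<in>{1..n}-{r}. pz (\<tau> r) - pz (\<tau> s)) * beta (\<tau> r) f)"
    unfolding G_def by (simp only: perm_sum[OF bt] perm_term[OF bt symf[OF tp]])
  define A where "A = {1..n-1}"
  have s1: "{1..n} = insert n A" using step by (auto simp: A_def)
  have s2: "{1..Suc n} = insert (n+1) (insert n A)" using step by (auto simp: A_def)
  have ij: "inj_on pz (insert n (insert (n+1) A))" by (auto intro!: inj_onI simp: pz_inj)
  have e3: "((\<Sum>r\<in>insert n A. cz c (\<tau> r) / (\<Prod>s\<in>insert n A - {r}. pz (\<tau> r) - pz (\<tau> s)) * beta (\<tau> r) f)
          - (\<Sum>r\<in>insert n A. cz c r / (\<Prod>s\<in>insert n A - {r}. pz r - pz s) * beta r f)) / (pz (n+1) - pz n)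
       = (\<Sum>r\<in>insert (n+1) (insert n A). cz c r / (\<Prod>s\<in>insert (n+1) (insert n A) - {r}. pz r - pz s) * beta r f)"
    by (rule step_abstract[where C = "cz c" and B = "\<lambda>r. beta r f" and x = pz and \<tau> = \<tau>, OF _ _ _ _ ij])
       (use step in \<open>auto simp: \<tau>_def A_def\<close>)
  show ?case unfolding e1 e2 unfolding G_def s1 s2 using e3 by simp
qed



lemma fold_polyin:
  "polyin m g \<Longrightarrow> (\<And>k. k \<in> set ks \<Longrightarrow> 1 \<le> k \<and> k + 1 \<le> m) \<Longrightarrow> polyin m (fold ddiff ks g)"
proof (induction ks arbitrary: g)
  case Nil then show ?case by simp
next
  case (Cons k ks)
  then show ?case using ddiff_polyin[of m g k] by simp
qed

lemma opA_sym:
  assumes symf: "\<And>\<sigma>. \<sigma> permutes {1..m} \<Longrightarrow> perm_act \<sigma> f = f" and sp: "\<sigma> permutes {1..m}"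
  shows "perm_act \<sigma> (opA m c f) = opA m c f"
proof -
  have bs: "bij \<sigma>" using sp by (rule permutes_bij)
  have inj: "inj \<sigma>" using bs by (rule bij_is_inj)
  define g where "g r = cz c r / (\<Prod>s\<in>{1..m}-{r}. pz r - pz s) * beta r f" for r
  have "perm_act \<sigma> (opA m c f) = (\<Sum>r\<in>{1..m}. cz c (\<sigma> r) / (\<Prod>s\<in>{1..m}-{r}. pz (\<sigma> r) - pz (\<sigma> s)) * beta (\<sigma> r) f)"
    unfolding opA_def by (simp only: perm_sum[OF bs] perm_term[OF bs symf[OF sp]])
  also have "\<dots> = (\<Sum>r\<in>{1..m}. g (\<sigma> r))"
  proof (rule sum.cong[OF refl])
    fix r assume r: "r \<in> {1..m}"
    have im: "\<sigma> ` ({1..m} - {r}) = {1..m} - {\<sigma> r}"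
      using permutes_image[OF sp] inj by (simp add: image_set_diff)
    have pe: "(\<Prod>s\<in>{1..m}-{\<sigma> r}. pz (\<sigma> r) - pz s) = (\<Prod>s\<in>{1..m}-{r}. pz (\<sigma> r) - pz (\<sigma> s))"
      unfolding im[symmetric] by (subst prod.reindex) (auto intro: inj_on_subset[OF inj])
    show "cz c (\<sigma> r) / (\<Prod>s\<in>{1..m}-{r}. pz (\<sigma> r) - pz (\<sigma> s)) * beta (\<sigma> r) f = g (\<sigma> r)"
      unfolding g_def by (simp only: pe)
  qed
  also have "\<dots> = (\<Sum>r\<in>\<sigma> ` {1..m}. g r)"
    by (subst sum.reindex) (auto intro: inj_on_subset[OF inj])
  also have "\<dots> = opA m c f" using permutes_image[OF sp] by (simp add: opA_def g_def)
  finally show ?thesis .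
qed

theorem lemma4p7:
  fixes \<iota> :: "complex \<Rightarrow> 'a::idom" and m :: nat and c :: "'a poly"
  assumes "complex_alg_hom \<iota>" and "m \<ge> 1"
  shows "(\<forall>f\<in>sym_ratfun m. opA m c f = opB m c f)
       \<and> (\<forall>f\<in>sym_poly m. opA m c f \<in> sym_poly m \<and> opB m c f \<in> sym_poly m)"
proof -
  have main: "opA m c f = opB m c f" if symf: "\<And>\<sigma>. \<sigma> permutes {1..m} \<Longrightarrow> perm_act \<sigma> f = f" for f
    unfolding opA_def opB_def using fold_formula[OF symf _ order.refl, of m c] assms(2) by simp
  have part2: "opA m c f \<in> sym_poly m \<and> opB m c f \<in> sym_poly m" if f: "f \<in> sym_poly m" for f
  proof -
    obtain p where fp: "f = Fract p 1" and mp: "mvars p \<subseteq> {1..m}"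
      and sp: "\<And>\<sigma>. \<sigma> permutes {1..m} \<Longrightarrow> msubst (\<lambda>i. mVar (\<sigma> i)) p = p"
      using f unfolding sym_poly_def by blast
    have symf: "perm_act \<sigma> f = f" if "\<sigma> permutes {1..m}" for \<sigma>
      using that by (simp add: fp perm_Fract1 permutes_bij sp)
    have eq: "opA m c f = opB m c f" by (rule main[OF symf])
    have two: "vin A (2 :: 'a mpol)" for A
      using vin_mConst[of A "2::'a"] by (simp add: mConst_def)
    have "polyin m (cz c 1 * beta 1 f)"
    proof -
      have "cz c 1 * beta 1 f = Fract (poly (map_poly mConst c) (mVar 1) * msubst (shf 1) p) 1"
        by (simp add: cz_def fp beta_Fract1)
      moreover have "vin {1..m} (poly (map_poly mConst c) (mVar 1) * msubst (shf 1) p)"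
      proof -
        have vs: "vin {1..m} (shf 1 i :: 'a mpol)" if "i \<in> {1..m}" for i
          using that assms(2) by (auto simp: shf_def intro!: vin_add vin_mVar two)
        have vp: "vin {1..m} p" using mp by (simp add: vin_def)
        show ?thesis using assms(2)
          by (intro vin_mult vin_poly vin_mVar vin_msubst[OF vp vs]) auto
      qed
      ultimately show ?thesis by (auto simp: polyin_def)
    qed
    then have "polyin m (opB m c f)" unfolding opB_def by (rule fold_polyin) auto
    then obtain q where q: "opB m c f = Fract q 1" and vq: "vin {1..m} q" by (auto simp: polyin_def)
    have "msubst (\<lambda>i. mVar (\<sigma> i)) q = q" if "\<sigma> permutes {1..m}" for \<sigma>
    proof -
      have "perm_act \<sigma> (opB m c f) = opB m c f"
        using opA_sym[OF symf that, of c] eq by simp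
      then show ?thesis using that by (simp add: q perm_Fract1 permutes_bij eq_fract)
    qed
    then have "opB m c f \<in> sym_poly m" using q vq by (auto simp: sym_poly_def vin_def)
    then show ?thesis using eq by simp
  qed
  have A1: "\<forall>f\<in>sym_ratfun m. opA m c f = opB m c f"
  proof
    fix f :: "'a mpol fract" assume "f \<in> sym_ratfun m"
    then show "opA m c f = opB m c f" by (intro main) (auto simp: sym_ratfun_def)
  qed
  have A2: "\<forall>f\<in>sym_poly m. opA m c f \<in> sym_poly m \<and> opB m c f \<in> sym_poly m"
    using part2 by blast
  show ?thesis using A1 A2 by blast
qed

end
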